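(* The Continuum Hypothesis implies $\chi_{\rm CF}(\omega_1,\omega_1,\omega)=\chi_{\rm CF}(\omega_1,\omega,\omega)=\omega_1$.
   Context: For a family $\mathcal A$ and cardinal $\rho$, $f:\bigcup\mathcal A\to\rho$ is a conflict free coloring of $\mathcal A$ if for every $A\in\mathcal A$ some $\zeta<\rho$ has $|A\cap f^{-1}\{\zeta\}|=1$; $\chi_{\rm CF}(\mathcal A)$ is the least such $\rho$. A $(\lambda,\kappa,\mu)$-system is a family of $\lambda$ sets each of size $\kappa$, distinct members meeting in fewer than $\mu$ points; $\chi_{\rm CF}(\lambda,\kappa,\mu)$ is the supremum of $\chi_{\rm CF}(\mathcal A)$ over all $(\lambda,\kappa,\mu)$-systems $\mathcal A$. *)

theory Defs
  imports Complex_Main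
begin

unbundle cardinal_syntax

text \<open>Cardinals are represented as in HOL's BNF cardinal library: well-order relations,
  compared via ordLeq / ordLess / ordIso.  omega = natLeq, omega_1 = cardSuc natLeq.\<close>

abbreviation omega0 :: "nat rel" where "omega0 \<equiv> natLeq"
abbreviation omega1 :: "nat set rel" where "omega1 \<equiv> cardSuc natLeq"

definition CH :: bool where
  "CH \<longleftrightarrow> |UNIV :: real set| =o omega1"

definition cf_coloring :: "'a set set \<Rightarrow> ('a \<Rightarrow> 'c) \<Rightarrow> 'c set \<Rightarrow> bool" where
  "cf_coloring A f C \<longleftrightarrow> f ` (\<Union>A) \<subseteq> C \<and>
     (\<forall>X\<in>A. \<exists>z\<in>C. \<exists>!x. x \<in> X \<and> f x = z)"

text \<open>Colours are taken from the type nat set, which has size continuum, so it is large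
  enough for every rho <= omega_1 relevant here.\<close>
definition chiCF_le :: "'a set set \<Rightarrow> 'b rel \<Rightarrow> bool" where
  "chiCF_le A \<rho> \<longleftrightarrow> (\<exists>(f :: 'a \<Rightarrow> nat set) C. cf_coloring A f C \<and> |C| \<le>o \<rho>)"

definition system :: "'a set set \<Rightarrow> 'b rel \<Rightarrow> 'c rel \<Rightarrow> 'd rel \<Rightarrow> bool" where
  "system A lam kap mu \<longleftrightarrow> |A| =o lam \<and> (\<forall>X\<in>A. |X| =o kap) \<and>
     (\<forall>X\<in>A. \<forall>Y\<in>A. X \<noteq> Y \<longrightarrow> |X \<inter> Y| <o mu)"

end

theory Submission
  imports Defs "HOL-Library.Countable_Set" "HOL-Analysis.Abstract_Topology_2"
begin


lemma upper_gen:
  fixes A :: "'a set set"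
  assumes cA: "|A| \<le>o omega1" and cX: "\<forall>X\<in>A. |X| \<le>o omega1 \<and> X \<noteq> {}"
  shows "chiCF_le A omega1"
proof -
  let ?B = "Field omega1"
  have co: "Card_order omega1" by (simp add: cardSuc_Card_order natLeq_Card_order)
  have iso: "|?B| =o omega1" using co card_of_Field_ordIso by blast
  have inf: "\<not> finite ?B" using Cinfinite_cardSuc[OF natLeq_Cinfinite] cinfinite_def by blast
  have le: "\<And>S::'z set. |S| \<le>o omega1 \<Longrightarrow> |S| \<le>o |?B|"
    using iso ordIso_symmetric ordLeq_ordIso_trans by blast
  have "|\<Union>X\<in>A. X| \<le>o |?B|"
    by (rule card_of_UNION_ordLeq_infinite[OF inf]) (use cA cX le in auto)
  then obtain g where g: "inj_on g (\<Union>A)" "g ` \<Union>A \<subseteq> ?B"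
    using card_of_ordLeq[of "\<Union>A" ?B] by auto
  have cf: "cf_coloring A g (g ` \<Union>A)"
    unfolding cf_coloring_def
  proof (intro conjI ballI)
    fix X assume X: "X \<in> A"
    then obtain x where x: "x \<in> X" using cX by auto
    show "\<exists>z\<in>g ` \<Union> A. \<exists>!y. y \<in> X \<and> g y = z"
    proof (intro bexI[of _ "g x"] ex1I[of _ x])
      fix y assume "y \<in> X \<and> g y = g x"
      then show "y = x" using g(1) X x by (meson UnionI inj_on_def)
    qed (use X x in auto)
  qed simp
  have "|g ` \<Union>A| \<le>o |?B|" using g(2) by (simp add: card_of_mono1)
  then have "|g ` \<Union>A| \<le>o omega1" using iso ordLeq_ordIso_trans by blast
  then show ?thesis unfolding chiCF_le_def using cf by blast
qed

lemma part1_up: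
  fixes A :: "'a set set"
  assumes "system A omega1 omega1 omega0" shows "chiCF_le A omega1"
proof (rule upper_gen)
  show "|A| \<le>o omega1" using assms unfolding system_def using ordIso_iff_ordLeq by blast
  show "\<forall>X\<in>A. |X| \<le>o omega1 \<and> X \<noteq> {}"
  proof
    fix X assume "X \<in> A"
    then have i: "|X| =o omega1" using assms unfolding system_def by blast
    then have "|X| \<le>o omega1" using ordIso_iff_ordLeq by blast
    moreover have "X \<noteq> {}"
    proof
      assume "X = {}"
      then have "finite X" by simp
      then have "|X| <o natLeq" using finite_iff_ordLess_natLeq by blast
      then have "|X| <o omega1" using cardSuc_greater[OF natLeq_Card_order] ordLess_transitive by blast
      then show False using i not_ordLess_ordIso by blast
    qed
    ultimately show "|X| \<le>o omega1 \<and> X \<noteq> {}" by blast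
  qed
qed

lemma part3_up:
  fixes A :: "'a set set"
  assumes "system A omega1 omega0 omega0" shows "chiCF_le A omega1"
proof (rule upper_gen)
  show "|A| \<le>o omega1" using assms unfolding system_def using ordIso_iff_ordLeq by blast
  show "\<forall>X\<in>A. |X| \<le>o omega1 \<and> X \<noteq> {}"
  proof
    fix X assume "X \<in> A"
    then have i: "|X| =o natLeq" using assms unfolding system_def by blast
    then have "|X| \<le>o omega1"
      using cardSuc_greater[OF natLeq_Card_order] ordIso_ordLess_trans ordLess_imp_ordLeq by blast
    moreover have "X \<noteq> {}"
    proof
      assume "X = {}"
      then have "finite X" by simp
      then have "|X| <o natLeq" using finite_iff_ordLess_natLeq by blast
      then show False using i not_ordLess_ordIso by blast
    qed
    ultimately show "|X| \<le>o omega1 \<and> X \<noteq> {}" by blast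
  qed
qed


abbreviation G :: "nat set set" where "G \<equiv> Field omega1"
definition lt :: "nat set \<Rightarrow> nat set \<Rightarrow> bool" where
  "lt x y \<longleftrightarrow> (x, y) \<in> omega1 \<and> x \<noteq> y"

lemma countable_card_le_natLeq: "countable A \<longleftrightarrow> |A| \<le>o natLeq"
proof -
  have "countable A \<longleftrightarrow> |A| \<le>o |UNIV::nat set|"
    unfolding countable_def card_of_ordLeq[symmetric] by auto
  then show ?thesis using card_of_nat ordLeq_ordIso_trans ordIso_symmetric by blast
qed

lemma co1: "Card_order omega1" by (simp add: cardSuc_Card_order natLeq_Card_order)
lemma wo1: "Well_order omega1" by (simp add: cardSuc_Well_order natLeq_Card_order)
lemma worel1: "wo_rel omega1" using wo1 wo_rel_def by blast

lemma lt_trans: "lt x y \<Longrightarrow> lt y z \<Longrightarrow> lt x z"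
  using wo1 unfolding lt_def
  by (metis antisymD order_on_defs(1,2,3) transD well_order_on_def)

lemma lt_le_trans: "(x,y) \<in> omega1 \<Longrightarrow> lt y z \<Longrightarrow> lt x z"
  using wo1 unfolding lt_def
  by (metis antisymD order_on_defs(1,2,3) transD well_order_on_def)

lemma le_lt_trans: "lt x y \<Longrightarrow> (y,z) \<in> omega1 \<Longrightarrow> lt x z"
  using wo1 unfolding lt_def
  by (metis antisymD order_on_defs(1,2,3) transD well_order_on_def)

lemma le_trans1: "(x,y) \<in> omega1 \<Longrightarrow> (y,z) \<in> omega1 \<Longrightarrow> (x,z) \<in> omega1"
  using wo1 by (metis order_on_defs(1,2,3) transD well_order_on_def)

lemma lt_irrefl: "\<not> lt x x" by (simp add: lt_def)

lemma lt_asym: "lt x y \<Longrightarrow> \<not> lt y x"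
  using lt_trans lt_irrefl by blast

lemma lt_total: "x \<in> G \<Longrightarrow> y \<in> G \<Longrightarrow> lt x y \<or> x = y \<or> lt y x"
  using wo1 unfolding lt_def
  by (metis order_on_defs(3) total_on_def well_order_on_def)

lemma not_le_lt: "x \<in> G \<Longrightarrow> y \<in> G \<Longrightarrow> (y, x) \<notin> omega1 \<Longrightarrow> lt x y"
  using lt_total unfolding lt_def by (metis order_on_defs(1,2,3) preorder_on_def refl_onD well_order_on_def wo1)

lemma refl1: "x \<in> G \<Longrightarrow> (x,x) \<in> omega1"
  using wo1 by (metis order_on_defs(1,2,3) preorder_on_def refl_onD well_order_on_def)

lemma lt_G: "lt x y \<Longrightarrow> x \<in> G \<and> y \<in> G"
  unfolding lt_def by (meson FieldI1 FieldI2)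

lemma le_G: "(x,y) \<in> omega1 \<Longrightarrow> x \<in> G \<and> y \<in> G"
  by (meson FieldI1 FieldI2)

lemma countable_underS: "x \<in> G \<Longrightarrow> countable (underS omega1 x)"
proof -
  assume xG: "x \<in> G"
  have lt1: "|underS omega1 x| <o omega1" using card_of_underS[OF co1 xG] .
  have "|underS omega1 x| \<le>o natLeq"
  proof (rule ccontr)
    assume a: "\<not> |underS omega1 x| \<le>o natLeq"
    have "natLeq <o |underS omega1 x|"
      using a not_ordLeq_iff_ordLess[OF natLeq_Well_order card_of_Well_order[of "underS omega1 x"]] by simp
    then have "omega1 \<le>o |underS omega1 x|"
      using cardSuc_ordLess_ordLeq[OF natLeq_Card_order card_of_Card_order[of "underS omega1 x"]] by simp
    then show False using lt1 not_ordLess_ordLeq by auto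
  qed
  then show ?thesis by (rule countable_card_le_natLeq[THEN iffD2])
qed

lemma countable_under: "countable {y. (y, x) \<in> omega1}"
proof (cases "x \<in> G")
  case True
  have "{y. (y, x) \<in> omega1} \<subseteq> insert x (underS omega1 x)"
    unfolding underS_def by auto
  moreover have "countable (insert x (underS omega1 x))" using countable_underS[OF True] by simp
  ultimately show ?thesis using countable_subset by blast
next
  case False
  then have "{y. (y, x) \<in> omega1} = {}" using FieldI2 by fastforce
  then show ?thesis by simp
qed

lemma G_uncountable: "\<not> countable G"
proof
  assume "countable G"
  then have "|G| \<le>o natLeq" using countable_card_le_natLeq by blast
  moreover have "|G| =o omega1" using card_of_Field_ordIso[OF co1] .
  moreover have "natLeq <o omega1" using cardSuc_greater[OF natLeq_Card_order] .
  ultimately have "omega1 \<le>o natLeq"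
    using ordIso_symmetric ordIso_ordLeq_trans by blast
  then show False using \<open>natLeq <o omega1\<close> not_ordLess_ordLeq by blast
qed

lemma bound_in:
  assumes X: "countable X" "X \<subseteq> G" and T: "T \<subseteq> G" "\<not> countable T"
  shows "\<exists>p\<in>T. \<forall>x\<in>X. lt x p"
proof -
  have "countable (\<Union>x\<in>X. {y. (y, x) \<in> omega1})"
    by (rule countable_UN) (use X countable_under in auto)
  then have "\<not> T \<subseteq> (\<Union>x\<in>X. {y. (y, x) \<in> omega1})" using T countable_subset by blast
  then obtain p where p: "p \<in> T" "p \<notin> (\<Union>x\<in>X. {y. (y, x) \<in> omega1})"
    by blast
  have "\<forall>x\<in>X. lt x p"
  proof
    fix x assume "x \<in> X"
    then show "lt x p" using p not_le_lt[of x p] X T by auto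
  qed
  then show ?thesis using p by blast
qed

lemma unc_next:
  assumes T: "T \<subseteq> G" "\<not> countable T" and b: "b \<in> G"
  shows "\<exists>p\<in>T. lt b p \<and> infinite {y\<in>T. lt b y \<and> lt y p}"
proof -
  let ?T' = "{y\<in>T. lt b y}"
  have "T \<subseteq> ?T' \<union> {y. (y, b) \<in> omega1}"
  proof
    fix y assume "y \<in> T"
    then show "y \<in> ?T' \<union> {y. (y, b) \<in> omega1}" using not_le_lt[of b y] T b by auto
  qed
  moreover have "countable {y. (y, b) \<in> omega1}" by (rule countable_under)
  ultimately have "\<not> countable ?T'" using T(2)
    by (meson countable_Un countable_subset)
  then have "infinite ?T'" using countable_finite by blast
  then obtain A where A: "A \<subseteq> ?T'" "countable A" "infinite A"
    using infinite_countable_subset' by blast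
  obtain p where p: "p \<in> T" "\<forall>x\<in>A. lt x p"
    using bound_in[OF A(2) _ T] A(1) T by blast
  have "A \<subseteq> {y\<in>T. lt b y \<and> lt y p}" using A(1) p by blast
  then have "infinite {y\<in>T. lt b y \<and> lt y p}" using A(3) finite_subset by blast
  moreover obtain a where "a \<in> A" using A(3) by (metis finite.emptyI ex_in_conv)
  then have "lt b p" using A(1) p lt_trans by blast
  ultimately show ?thesis using p by blast
qed


definition small :: "nat set set \<Rightarrow> bool" where
  "small X \<longleftrightarrow> (\<forall>x\<in>X. finite {y\<in>X. lt y x})"

definition bigL :: "nat set set \<Rightarrow> nat set set \<Rightarrow> bool" where
  "bigL L S \<longleftrightarrow> (\<forall>b\<in>L. \<exists>p\<in>S. lt b p \<and> infinite {y\<in>S. lt b y \<and> lt y p})"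

lemma avoid_small:
  assumes "finite YY" "\<forall>Y\<in>YY. small Y" "S \<subseteq> L" "bigL L S"
  shows "\<forall>b\<in>L. \<exists>p\<in>S. lt b p \<and> infinite ({y\<in>S. lt b y \<and> lt y p} - \<Union>YY)"
  using assms(1,2)
proof (induction YY rule: finite_induct)
  case empty
  then show ?case using assms(4) unfolding bigL_def by simp
next
  case (insert Y YY)
  have IH: "\<forall>b\<in>L. \<exists>p\<in>S. lt b p \<and> infinite ({y\<in>S. lt b y \<and> lt y p} - \<Union>YY)"
    using insert by blast
  have sY: "small Y" using insert by blast
  show ?case
  proof
    fix b assume b: "b \<in> L"
    obtain p1 where p1: "p1 \<in> S" "lt b p1" "infinite ({y\<in>S. lt b y \<and> lt y p1} - \<Union>YY)"
      using IH b by blast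
    have p1L: "p1 \<in> L" using p1(1) assms(3) by blast
    obtain p2 where p2: "p2 \<in> S" "lt p1 p2" "infinite ({y\<in>S. lt p1 y \<and> lt y p2} - \<Union>YY)"
      using IH p1L by blast
    show "\<exists>p\<in>S. lt b p \<and> infinite ({y\<in>S. lt b y \<and> lt y p} - \<Union>(insert Y YY))"
    proof (cases "finite {y\<in>Y. lt b y \<and> lt y p1}")
      case True
      have "({y\<in>S. lt b y \<and> lt y p1} - \<Union>YY) - {y\<in>Y. lt b y \<and> lt y p1}
            \<subseteq> {y\<in>S. lt b y \<and> lt y p1} - \<Union>(insert Y YY)" by auto
      moreover have "infinite (({y\<in>S. lt b y \<and> lt y p1} - \<Union>YY) - {y\<in>Y. lt b y \<and> lt y p1})"
        using p1(3) True by (meson Diff_infinite_finite)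
      ultimately show ?thesis using p1 finite_subset by blast
    next
      case False
      have noY: "\<forall>y\<in>Y. \<not> lt p1 y"
      proof (intro ballI notI)
        fix y assume y: "y \<in> Y" "lt p1 y"
        have "{z\<in>Y. lt b z \<and> lt z p1} \<subseteq> {z\<in>Y. lt z y}" using y(2) lt_trans by blast
        moreover have "finite {z\<in>Y. lt z y}" using sY y(1) unfolding small_def by blast
        ultimately show False using False finite_subset by blast
      qed
      have "{y\<in>S. lt p1 y \<and> lt y p2} - \<Union>YY \<subseteq> {y\<in>S. lt b y \<and> lt y p2} - \<Union>(insert Y YY)"
        using noY p1(2) lt_trans by blast
      then have "infinite ({y\<in>S. lt b y \<and> lt y p2} - \<Union>(insert Y YY))"
        using p2(3) finite_subset by blast
      moreover have "lt b p2" using p1(2) p2(2) lt_trans by blast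
      ultimately show ?thesis using p2(1) by blast
    qed
  qed
qed

lemma avoid:
  assumes "finite YY" "\<forall>Y\<in>YY. small Y \<or> finite (Y \<inter> S)" "S \<subseteq> L" "bigL L S" "b \<in> L"
  shows "infinite ({y\<in>S. lt b y} - \<Union>YY)"
proof -
  let ?Ys = "{Y\<in>YY. small Y}" and ?Yf = "{Y\<in>YY. \<not> small Y}"
  have fY: "finite ?Ys" using assms(1) by simp
  have sY: "\<forall>Y\<in>?Ys. small Y" by blast
  have "\<forall>b\<in>L. \<exists>p\<in>S. lt b p \<and> infinite ({y\<in>S. lt b y \<and> lt y p} - \<Union>?Ys)"
    using avoid_small[OF fY sY assms(3,4)] .
  then obtain p where p: "p \<in> S" "lt b p" "infinite ({y\<in>S. lt b y \<and> lt y p} - \<Union>?Ys)"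
    using assms(5) by blast
  have fin: "finite (S \<inter> \<Union>?Yf)"
  proof -
    have "S \<inter> \<Union>?Yf = (\<Union>Y\<in>?Yf. Y \<inter> S)" by blast
    moreover have "finite (\<Union>Y\<in>?Yf. Y \<inter> S)"
    proof (rule finite_UN_I)
      show "finite ?Yf" using assms(1) by simp
      show "\<And>Y. Y \<in> ?Yf \<Longrightarrow> finite (Y \<inter> S)" using assms(2) by blast
    qed
    ultimately show ?thesis by simp
  qed
  have "({y\<in>S. lt b y \<and> lt y p} - \<Union>?Ys) - (S \<inter> \<Union>?Yf) \<subseteq> {y\<in>S. lt b y} - \<Union>YY" by blast
  moreover have "infinite (({y\<in>S. lt b y \<and> lt y p} - \<Union>?Ys) - (S \<inter> \<Union>?Yf))"
    using p(3) fin by (meson Diff_infinite_finite)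
  ultimately show ?thesis using finite_subset by blast
qed

lemma seq_choice:
  assumes "\<forall>n. A n \<subseteq> L" "\<forall>n. \<forall>b\<in>L. infinite ({y\<in>A n. lt b y} - Z n)" "b0 \<in> L"
  shows "\<exists>c. \<forall>n. (c n \<in> A n \<and> c n \<notin> Z n) \<and> lt (c n) (c (Suc n))"
proof -
  have "\<exists>x. x \<in> A 0 \<and> x \<notin> Z 0"
  proof -
    have "infinite ({y\<in>A 0. lt b0 y} - Z 0)" using assms(2,3) by blast
    then obtain x where "x \<in> {y\<in>A 0. lt b0 y} - Z 0" by (metis finite.emptyI ex_in_conv)
    then show ?thesis by blast
  qed
  moreover have "\<exists>y. (y \<in> A (Suc n) \<and> y \<notin> Z (Suc n)) \<and> lt x y" if "x \<in> A n \<and> x \<notin> Z n" for x n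
  proof -
    have "x \<in> L" using that assms(1) by blast
    then have "infinite ({y\<in>A (Suc n). lt x y} - Z (Suc n))" using assms(2) by blast
    then obtain y where "y \<in> {y\<in>A (Suc n). lt x y} - Z (Suc n)" by (metis finite.emptyI ex_in_conv)
    then show ?thesis by blast
  qed
  ultimately show ?thesis
    using dependent_nat_choice[of "\<lambda>n x. x \<in> A n \<and> x \<notin> Z n" "\<lambda>n x y. lt x y"] by blast
qed

lemma inc_lt:
  assumes "\<forall>n. lt (c n) (c (Suc n))" "m < n"
  shows "lt (c m) (c n)"
  using assms(2)
proof (induction n)
  case 0 then show ?case by simp
next
  case (Suc n)
  show ?case
  proof (cases "m = n")
    case True then show ?thesis using assms(1) by simp
  next
    case False
    then have "lt (c m) (c n)" using Suc by simp
    then show ?thesis using assms(1) lt_trans by blast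
  qed
qed

lemma inc_inj:
  assumes "\<forall>n. lt (c n) (c (Suc n))" shows "inj c"
proof (rule injI)
  fix m n assume e: "c m = c n"
  show "m = n"
  proof (rule ccontr)
    assume "m \<noteq> n"
    then have "m < n \<or> n < m" by arith
    then show False using inc_lt[OF assms] e lt_irrefl by metis
  qed
qed

lemma inc_small:
  assumes "\<forall>n. lt (c n) (c (Suc n))" shows "small (range c)"
  unfolding small_def
proof
  fix x assume "x \<in> range c"
  then obtain n where n: "x = c n" by blast
  have "{y\<in>range c. lt y x} \<subseteq> c ` {..<n}"
  proof
    fix y assume y: "y \<in> {y\<in>range c. lt y x}"
    then obtain m where m: "y = c m" by blast
    have "m < n"
    proof (rule ccontr)
      assume "\<not> m < n"
      then have "m = n \<or> n < m" by arith
      then show False using inc_lt[OF assms, of n m] y m n lt_irrefl lt_asym by auto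
    qed
    then show "y \<in> c ` {..<n}" using m by blast
  qed
  then show "finite {y\<in>range c. lt y x}" using finite_subset by blast
qed

lemma diag:
  assumes L: "L \<noteq> {}" and A: "\<forall>n. A n \<subseteq> L" "\<forall>n. bigL L (A n)"
    and Y: "countable YY" "\<forall>Y\<in>YY. small Y \<or> (\<forall>n. finite (Y \<inter> A n))"
  shows "\<exists>c. (\<forall>n. c n \<in> A n) \<and> (\<forall>n. lt (c n) (c (Suc n))) \<and> (\<forall>Y\<in>YY. finite (range c \<inter> Y))"
proof -
  let ?YY = "insert {} YY"
  define Yn where "Yn = from_nat_into ?YY"
  have cY: "countable ?YY" using Y(1) by simp
  have Yn_in: "Yn i \<in> ?YY" for i unfolding Yn_def by (rule from_nat_into) simp
  define Z where "Z n = \<Union>(Yn ` {..n})" for n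
  have hyp: "\<forall>n. \<forall>b\<in>L. infinite ({y\<in>A n. lt b y} - Z n)"
  proof (intro allI ballI)
    fix n b assume b: "b \<in> L"
    have "\<forall>Y'\<in>Yn ` {..n}. small Y' \<or> finite (Y' \<inter> A n)"
    proof
      fix Y' assume "Y' \<in> Yn ` {..n}"
      then have "Y' \<in> ?YY" using Yn_in by blast
      then show "small Y' \<or> finite (Y' \<inter> A n)" using Y(2) by auto
    qed
    then show "infinite ({y\<in>A n. lt b y} - Z n)"
      unfolding Z_def using avoid[of "Yn ` {..n}" "A n" L b] A b by blast
  qed
  obtain b0 where "b0 \<in> L" using L by blast
  then obtain c where c: "\<forall>n. (c n \<in> A n \<and> c n \<notin> Z n) \<and> lt (c n) (c (Suc n))"
    using seq_choice[OF A(1) hyp] by blast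
  have "finite (range c \<inter> Y)" if "Y \<in> YY" for Y
  proof -
    have "\<exists>i. from_nat_into ?YY i = Y" using from_nat_into_surj[OF cY, of Y] that by blast
    then obtain i where i: "Yn i = Y" unfolding Yn_def by blast
    have "range c \<inter> Y \<subseteq> c ` {..<i}"
    proof
      fix x assume x: "x \<in> range c \<inter> Y"
      then obtain n where n: "x = c n" by blast
      have "\<not> i \<le> n"
      proof
        assume "i \<le> n"
        then have "Y \<subseteq> Z n" unfolding Z_def using i by blast
        moreover have "c n \<in> Y" using x unfolding n by simp
        ultimately have "c n \<in> Z n" by blast
        then show False using c by blast
      qed
      then show "x \<in> c ` {..<i}" using n by auto
    qed
    then show ?thesis using finite_subset by blast
  qed
  then show ?thesis using c by blast
qed


lemma G_big: "bigL G G"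
  unfolding bigL_def
proof
  fix b assume "b \<in> G"
  then show "\<exists>p\<in>G. lt b p \<and> infinite {y\<in>G. lt b y \<and> lt y p}"
    using unc_next[of G b] G_uncountable by simp
qed

lemma G_ne: "G \<noteq> {}" using G_uncountable by auto

lemma multi_seq:
  assumes I: "countable I" and T: "\<forall>c\<in>I. T c \<subseteq> G \<and> \<not> countable (T c)"
  shows "\<exists>L. L \<subseteq> G \<and> L \<noteq> {} \<and> countable L \<and> (\<forall>x\<in>L. \<forall>y. (y,x) \<in> omega1 \<longrightarrow> y \<in> L)
           \<and> (\<forall>c\<in>I. bigL L (T c \<inter> L))"
proof -
  define Q where "Q x y \<longleftrightarrow> lt x y \<and> (\<forall>c\<in>I. \<exists>p\<in>T c. lt x p \<and> lt p y \<and> infinite {z\<in>T c. lt x z \<and> lt z p})"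
    for x y
  have step: "\<exists>y. y \<in> G \<and> Q x y" if x: "x \<in> G" for x
  proof -
    define pc where "pc c = (SOME p. p\<in>T c \<and> lt x p \<and> infinite {z\<in>T c. lt x z \<and> lt z p})" for c
    have pc: "pc c \<in> T c \<and> lt x (pc c) \<and> infinite {z\<in>T c. lt x z \<and> lt z (pc c)}" if "c \<in> I" for c
    proof -
      have Tc: "T c \<subseteq> G" "\<not> countable (T c)" using T that by auto
      have "\<exists>p\<in>T c. lt x p \<and> infinite {z\<in>T c. lt x z \<and> lt z p}"
        using unc_next[OF Tc x] .
      then show ?thesis unfolding pc_def by (rule someI2_bex) blast
    qed
    have cX: "countable (insert x (pc ` I))" using I by simp
    have sX: "insert x (pc ` I) \<subseteq> G" using x pc T by blast
    obtain y where y: "y \<in> G" "\<forall>z\<in>insert x (pc ` I). lt z y"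
      using bound_in[OF cX sX _ G_uncountable] by blast
    have "Q x y" unfolding Q_def
    proof (intro conjI ballI)
      show "lt x y" using y by blast
      fix c assume c: "c \<in> I"
      show "\<exists>p\<in>T c. lt x p \<and> lt p y \<and> infinite {z\<in>T c. lt x z \<and> lt z p}"
        using pc[OF c] y(2) c by blast
    qed
    then show ?thesis using y by blast
  qed
  obtain x0 where "x0 \<in> G" using G_ne by blast
  then obtain b where b: "\<forall>n. b n \<in> G \<and> Q (b n) (b (Suc n))"
    using dependent_nat_choice[of "\<lambda>n x. x \<in> G" "\<lambda>n x y. Q x y"] step by blast
  define L where "L = {z. \<exists>n. (z, b n) \<in> omega1}"
  have LG: "L \<subseteq> G" unfolding L_def using FieldI1 by fastforce
  have Lne: "L \<noteq> {}" unfolding L_def using refl1 b by blast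
  have Lc: "countable L"
  proof -
    have "L = (\<Union>n. {z. (z, b n) \<in> omega1})" unfolding L_def by blast
    then show ?thesis using countable_under by simp
  qed
  have Ld: "\<forall>x\<in>L. \<forall>y. (y,x) \<in> omega1 \<longrightarrow> y \<in> L"
    unfolding L_def using le_trans1 by blast
  have Lb: "bigL L (T c \<inter> L)" if c: "c \<in> I" for c
    unfolding bigL_def
  proof
    fix z assume "z \<in> L"
    then obtain m where m: "(z, b m) \<in> omega1" unfolding L_def by blast
    obtain p where p: "p \<in> T c" "lt (b m) p" "lt p (b (Suc m))" "infinite {y\<in>T c. lt (b m) y \<and> lt y p}"
      using b c unfolding Q_def by blast
    have pL: "p \<in> L" using p(3) unfolding L_def lt_def by blast
    have "lt z p" using m p(2) lt_le_trans by blast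
    moreover have "{y\<in>T c. lt (b m) y \<and> lt y p} \<subseteq> {y\<in>T c \<inter> L. lt z y \<and> lt y p}"
    proof
      fix y assume y: "y \<in> {y\<in>T c. lt (b m) y \<and> lt y p}"
      have "lt y (b (Suc m))" using y p(3) lt_trans by blast
      then have "y \<in> L" unfolding L_def lt_def by blast
      moreover have "lt z y" using y m lt_le_trans by blast
      ultimately show "y \<in> {y\<in>T c \<inter> L. lt z y \<and> lt y p}" using y by blast
    qed
    then have "infinite {y\<in>T c \<inter> L. lt z y \<and> lt y p}" using p(4) finite_subset by blast
    ultimately show "\<exists>p\<in>T c \<inter> L. lt z p \<and> infinite {y\<in>T c \<inter> L. lt z y \<and> lt y p}"
      using p(1) pL by blast
  qed
  show ?thesis using LG Lne Lc Ld Lb by blast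
qed

type_synonym cand = "nat \<Rightarrow> nat \<Rightarrow> nat set"

definition enc :: "cand \<times> nat set \<Rightarrow> nat set" where
  "enc hx = {prod_encode (0, prod_encode (i, prod_encode (j, k))) | i j k. k \<in> fst hx i j}
           \<union> {prod_encode (1, k) | k. k \<in> snd hx}"

lemma enc_mem1: "prod_encode (0, prod_encode (i, prod_encode (j, k))) \<in> enc (h, x) \<longleftrightarrow> k \<in> h i j"
  unfolding enc_def by (auto simp: prod_encode_eq)

lemma enc_mem2: "prod_encode (1, k) \<in> enc (h, x) \<longleftrightarrow> k \<in> x"
  unfolding enc_def by (auto simp: prod_encode_eq)

lemma enc_inj: "inj enc"
proof (rule injI)
  fix a b :: "cand \<times> nat set"
  assume e: "enc a = enc b"
  obtain h x where a: "a = (h, x)" by (cases a)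
  obtain h' x' where b: "b = (h', x')" by (cases b)
  have e2: "enc (h, x) = enc (h', x')" using e a b by simp
  have "k \<in> h i j \<longleftrightarrow> k \<in> h' i j" for i j k
    using enc_mem1[of i j k h x] enc_mem1[of i j k h' x'] e2 by simp
  then have "h = h'" by blast
  moreover have "k \<in> x \<longleftrightarrow> k \<in> x'" for k
    using enc_mem2[of k h x] enc_mem2[of k h' x'] e2 by simp
  then have "x = x'" by blast
  ultimately show "a = b" using a b by simp
qed

lemma exists_j:
  assumes CH
  shows "\<exists>j. inj_on j ((UNIV::cand set) \<times> G) \<and> j ` ((UNIV::cand set) \<times> G) \<subseteq> G"
proof -
  have "|UNIV::real set| =o omega1" using assms unfolding CH_def .
  moreover have "|UNIV::nat set set| =o |UNIV::real set|"
    using nat_sets_eqpoll_reals eqpoll_iff_card_of_ordIso by blast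
  ultimately have n1: "|UNIV::nat set set| =o omega1" using ordIso_transitive by blast
  have "|G| =o omega1" using card_of_Field_ordIso[OF co1] .
  then have n2: "|UNIV::nat set set| =o |G|" using n1 ordIso_symmetric ordIso_transitive by blast
  have "|(UNIV::cand set) \<times> G| \<le>o |UNIV::nat set set|"
  proof -
    have "inj_on enc ((UNIV::cand set) \<times> G)" using enc_inj inj_on_subset by blast
    moreover have "enc ` ((UNIV::cand set) \<times> G) \<subseteq> UNIV" by simp
    ultimately show ?thesis unfolding card_of_ordLeq[symmetric] by blast
  qed
  then have "|(UNIV::cand set) \<times> G| \<le>o |G|" using n2 ordLeq_ordIso_trans by blast
  then show ?thesis unfolding card_of_ordLeq[symmetric] by simp
qed


definition cand_of :: "(cand \<times> nat set \<Rightarrow> nat set) \<Rightarrow> nat set \<Rightarrow> cand" where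
  "cand_of j \<eta> = fst (inv_into ((UNIV::cand set) \<times> G) j \<eta>)"

lemma cand_of_j:
  assumes "inj_on j ((UNIV::cand set) \<times> G)" "y \<in> G"
  shows "cand_of j (j (h, y)) = h"
  unfolding cand_of_def using inv_into_f_f[OF assms(1)] assms(2) by simp

lemma bigL_mono: "L' \<subseteq> L \<Longrightarrow> bigL L S \<Longrightarrow> bigL L' S"
  unfolding bigL_def by blast

lemma ordLess_omega1_countable:
  assumes "|C| <o omega1" shows "countable C"
proof -
  have "|C| \<le>o natLeq"
  proof (rule ccontr)
    assume a: "\<not> |C| \<le>o natLeq"
    have "natLeq <o |C|"
      using a not_ordLeq_iff_ordLess[OF natLeq_Well_order card_of_Well_order[of C]] by simp
    then have "omega1 \<le>o |C|"
      using cardSuc_ordLess_ordLeq[OF natLeq_Card_order card_of_Card_order[of C]] by simp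
    then show False using assms not_ordLess_ordLeq by auto
  qed
  then show ?thesis by (rule countable_card_le_natLeq[THEN iffD2])
qed

definition S4 :: "cand \<Rightarrow> nat set set" where
  "S4 h = (if range (h 0) \<inter> G \<noteq> {} \<and> bigL (range (h 0) \<inter> G) (range (h 0) \<inter> G)
           then range (h 0) \<inter> G else G)"

definition spec4 :: "nat set set \<Rightarrow> nat set set set \<Rightarrow> nat set set \<Rightarrow> bool" where
  "spec4 S prev X \<longleftrightarrow> X \<subseteq> S \<and> small X \<and> infinite X \<and> countable X \<and> (\<forall>Y\<in>prev. finite (X \<inter> Y))"

definition stage4 :: "(cand \<times> nat set \<Rightarrow> nat set) \<Rightarrow> (nat set \<Rightarrow> nat set set) \<Rightarrow> nat set \<Rightarrow> nat set set" where
  "stage4 j g \<eta> = (SOME X. spec4 (S4 (cand_of j \<eta>)) (g ` underS omega1 \<eta>) X)"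

definition X4 :: "(cand \<times> nat set \<Rightarrow> nat set) \<Rightarrow> nat set \<Rightarrow> nat set set" where
  "X4 j = wo_rel.worec omega1 (stage4 j)"

lemma X4_fix: "X4 j \<eta> = stage4 j (X4 j) \<eta>"
proof -
  have "wo_rel.adm_wo omega1 (stage4 j)"
    unfolding wo_rel.adm_wo_def[OF worel1]
  proof (intro allI impI)
    fix f g :: "nat set \<Rightarrow> nat set set" and x
    assume "\<forall>y\<in>underS omega1 x. f y = g y"
    then have "f ` underS omega1 x = g ` underS omega1 x" by (simp add: image_def)
    then show "stage4 j f x = stage4 j g x" unfolding stage4_def by simp
  qed
  then show ?thesis unfolding X4_def using wo_rel.worec_fixpoint[OF worel1] by metis
qed

lemma S4_props: "S4 h \<subseteq> G \<and> S4 h \<noteq> {} \<and> bigL (S4 h) (S4 h)"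
  unfolding S4_def using G_big G_ne by auto

lemma exist4:
  assumes "countable prev" "\<forall>Y\<in>prev. small Y"
  shows "\<exists>X. spec4 (S4 h) prev X"
proof -
  let ?S = "S4 h"
  have "\<exists>c. (\<forall>n. c n \<in> ?S) \<and> (\<forall>n. lt (c n) (c (Suc n))) \<and> (\<forall>Y\<in>prev. finite (range c \<inter> Y))"
    using diag[of ?S "\<lambda>_. ?S" prev] S4_props assms by blast
  then obtain c where c: "\<forall>n. c n \<in> ?S" "\<forall>n. lt (c n) (c (Suc n))" "\<forall>Y\<in>prev. finite (range c \<inter> Y)"
    by blast
  have "spec4 ?S prev (range c)"
    unfolding spec4_def
    using c inc_small[OF c(2)] inc_inj[OF c(2)] finite_imageD by blast
  then show ?thesis by blast
qed

lemma spec4_all: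
  "\<eta> \<in> G \<Longrightarrow> spec4 (S4 (cand_of j \<eta>)) (X4 j ` underS omega1 \<eta>) (X4 j \<eta>)"
proof (induction \<eta> rule: wo_rel.well_order_induct[OF worel1])
  case (1 x)
  have prev_small: "\<forall>Y\<in>X4 j ` underS omega1 x. small Y"
  proof
    fix Y assume "Y \<in> X4 j ` underS omega1 x"
    then obtain y where y: "y \<in> underS omega1 x" "Y = X4 j y" by blast
    then have yx: "y \<noteq> x \<and> (y, x) \<in> omega1" unfolding underS_def by simp
    then have "y \<in> G" using FieldI1 by metis
    then show "small Y" using 1 yx y unfolding spec4_def by blast
  qed
  have "countable (X4 j ` underS omega1 x)" using countable_underS[OF 1(2)] by simp
  then have "\<exists>X. spec4 (S4 (cand_of j x)) (X4 j ` underS omega1 x) X"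
    using exist4 prev_small by blast
  then have "spec4 (S4 (cand_of j x)) (X4 j ` underS omega1 x) (stage4 j (X4 j) x)"
    unfolding stage4_def by (rule someI_ex)
  then show ?case using X4_fix by metis
qed


lemma countable_infinite_natLeq: "countable X \<Longrightarrow> infinite X \<Longrightarrow> |X| =o natLeq"
  using countable_card_le_natLeq infinite_iff_natLeq_ordLeq ordIso_iff_ordLeq by blast

lemma inj_image_omega1:
  assumes "inj_on F G" shows "|F ` G| =o omega1"
proof -
  have "|F ` G| =o |G|" using assms card_of_ordIso bij_betw_imageI by (metis ordIso_symmetric)
  then show ?thesis using card_of_Field_ordIso[OF co1] ordIso_transitive by blast
qed

lemma adfam_inj:
  assumes "\<forall>x\<in>G. infinite (F x)" "\<forall>x\<in>G. \<forall>y\<in>G. x \<noteq> y \<longrightarrow> finite (F x \<inter> F y)"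
  shows "inj_on F G"
proof (rule inj_onI)
  fix x y assume "x \<in> G" "y \<in> G" "F x = F y"
  then show "x = y" using assms by (metis Int_absorb)
qed

lemma fin_natLeq: "finite X \<Longrightarrow> |X| <o natLeq"
  using finite_iff_ordLess_natLeq by blast

lemma mono_color:
  assumes "f ` \<Union>A \<subseteq> C" "C \<noteq> {}" "countable C"
  shows "\<exists>c\<in>C. \<not> countable {x\<in>G. (if x \<in> \<Union>A then f x else (SOME c. c\<in>C)) = c}"
proof (rule ccontr)
  let ?f = "\<lambda>x. if x \<in> \<Union>A then f x else (SOME c. c\<in>C)"
  assume "\<not> ?thesis"
  then have a: "\<forall>c\<in>C. countable {x\<in>G. ?f x = c}" by blast
  have "(SOME c. c\<in>C) \<in> C" using assms(2) by (simp add: some_in_eq)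
  then have "G \<subseteq> (\<Union>c\<in>C. {x\<in>G. ?f x = c})" using assms(1) by auto
  moreover have "countable (\<Union>c\<in>C. {x\<in>G. ?f x = c})" using a assms(3) by blast
  ultimately show False using G_uncountable countable_subset by blast
qed

lemma part4:
  assumes CH
  shows "\<forall>\<rho> :: nat set rel. Card_order \<rho> \<and> \<rho> <o omega1 \<longrightarrow>
            (\<exists>A :: nat set set set. system A omega1 omega0 omega0 \<and> \<not> chiCF_le A \<rho>)"
proof (intro allI impI)
  fix \<rho> :: "nat set rel" assume r: "Card_order \<rho> \<and> \<rho> <o omega1"
  obtain j where j: "inj_on j ((UNIV::cand set) \<times> G)" "j ` ((UNIV::cand set) \<times> G) \<subseteq> G"
    using exists_j[OF assms] by blast
  define A where "A = X4 j ` G"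
  have sp: "\<And>\<eta>. \<eta> \<in> G \<Longrightarrow> spec4 (S4 (cand_of j \<eta>)) (X4 j ` underS omega1 \<eta>) (X4 j \<eta>)"
    using spec4_all by blast
  have inf: "\<forall>x\<in>G. infinite (X4 j x)" using sp unfolding spec4_def by blast
  have ad: "\<forall>x\<in>G. \<forall>y\<in>G. x \<noteq> y \<longrightarrow> finite (X4 j x \<inter> X4 j y)"
  proof (intro ballI impI)
    fix x y assume xy: "x \<in> G" "y \<in> G" "x \<noteq> y"
    then have "lt x y \<or> lt y x" using lt_total by blast
    then show "finite (X4 j x \<inter> X4 j y)"
    proof
      assume "lt x y"
      then have "x \<in> underS omega1 y" unfolding lt_def underS_def by simp
      then show ?thesis using sp[OF xy(2)] unfolding spec4_def by (simp add: Int_commute)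
    next
      assume "lt y x"
      then have "y \<in> underS omega1 x" unfolding lt_def underS_def by simp
      then show ?thesis using sp[OF xy(1)] unfolding spec4_def by simp
    qed
  qed
  have injX: "inj_on (X4 j) G" using adfam_inj[OF inf ad] .
  have sys: "system A omega1 omega0 omega0"
    unfolding system_def A_def
  proof (intro conjI ballI impI)
    show "|X4 j ` G| =o omega1" using inj_image_omega1[OF injX] .
    fix X assume "X \<in> X4 j ` G"
    then obtain x where x: "x \<in> G" "X = X4 j x" by blast
    show "|X| =o omega0" using sp[OF x(1)] x(2) countable_infinite_natLeq unfolding spec4_def by blast
  next
    fix X Y assume "X \<in> X4 j ` G" "Y \<in> X4 j ` G" "X \<noteq> Y"
    then obtain x y where "x \<in> G" "y \<in> G" "X = X4 j x" "Y = X4 j y" "x \<noteq> y" by blast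
    then show "|X \<inter> Y| <o omega0" using ad fin_natLeq by blast
  qed
  have ncf: "\<not> chiCF_le A \<rho>"
  proof
    assume "chiCF_le A \<rho>"
    then obtain f :: "nat set \<Rightarrow> nat set" and C where fC: "cf_coloring A f C" "|C| \<le>o \<rho>"
      unfolding chiCF_le_def by blast
    have "|C| <o omega1" using fC(2) r ordLeq_ordLess_trans by blast
    then have cC: "countable C" by (rule ordLess_omega1_countable)
    have fAC: "f ` \<Union>A \<subseteq> C" using fC(1) unfolding cf_coloring_def by blast
    obtain x0 where x0: "x0 \<in> G" using G_ne by blast
    have "X4 j x0 \<noteq> {}" using inf x0 by force
    then obtain a0 where "a0 \<in> \<Union>A" unfolding A_def using x0 by blast
    then have Cne: "C \<noteq> {}" using fAC by blast
    let ?f = "\<lambda>x. if x \<in> \<Union>A then f x else (SOME c. c\<in>C)"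
    obtain c where c: "c \<in> C" "\<not> countable {x\<in>G. ?f x = c}"
      using mono_color[OF fAC Cne cC] by blast
    define K where "K = {x\<in>G. ?f x = c}"
    have KG: "K \<subseteq> G" unfolding K_def by blast
    obtain L where L: "L \<subseteq> G" "L \<noteq> {}" "countable L" "bigL L (K \<inter> L)"
      using multi_seq[of "{c}" "\<lambda>_. K"] KG c(2) unfolding K_def by auto
    define D where "D = K \<inter> L"
    have Dsub: "D \<subseteq> L" unfolding D_def by blast
    have Dbig: "bigL D D" using bigL_mono[OF Dsub] L(4) unfolding D_def by blast
    have Dne: "D \<noteq> {}" using L(2,4) unfolding bigL_def D_def by blast
    have Dc: "countable D" using L(3) Dsub countable_subset by blast
    define h :: cand where "h = (\<lambda>_ n. from_nat_into D n)"
    have hD: "range (h 0) \<inter> G = D" unfolding h_def using Dne Dc Dsub L(1) by auto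
    have S4h: "S4 h = D" unfolding S4_def hD using Dne Dbig by simp
    define \<eta> where "\<eta> = j (h, x0)"
    have etaG: "\<eta> \<in> G" unfolding \<eta>_def using j(2) x0 by blast
    have ch: "cand_of j \<eta> = h" unfolding \<eta>_def using cand_of_j[OF j(1) x0] .
    let ?X = "X4 j \<eta>"
    have XA: "?X \<in> A" unfolding A_def using etaG by blast
    have XD: "?X \<subseteq> D" and Xinf: "infinite ?X" using sp[OF etaG] unfolding spec4_def ch S4h by auto
    have Xcol: "\<forall>x\<in>?X. f x = c"
    proof
      fix x assume x: "x \<in> ?X"
      then have "x \<in> \<Union>A" using XA by blast
      moreover have "x \<in> K" using x XD unfolding D_def by blast
      ultimately show "f x = c" unfolding K_def by simp
    qed
    have cfA: "\<forall>X\<in>A. \<exists>z\<in>C. \<exists>!x. x \<in> X \<and> f x = z"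
      using fC(1) unfolding cf_coloring_def by (rule conjunct2)
    from bspec[OF cfA XA] obtain z where z: "z \<in> C" "\<exists>!x. x \<in> ?X \<and> f x = z" ..
    have "\<exists>x. (x \<in> ?X \<and> f x = z) \<and> (\<forall>y. y \<in> ?X \<and> f y = z \<longrightarrow> y = x)"
      using z(2) by (simp only: Ex1_def)
    then obtain x where x: "x \<in> ?X" "f x = z" and uq: "\<forall>y. y \<in> ?X \<and> f y = z \<longrightarrow> y = x"
      by blast
    have "infinite (?X - {x})" using Xinf by simp
    then have "?X - {x} \<noteq> {}" by (metis finite.emptyI)
    then obtain x' where x': "x' \<in> ?X" "x' \<noteq> x" by blast
    have fx': "f x' = z" using Xcol x x' by simp
    have "x' = x" using uq x'(1) fx' by blast
    then show False using x'(2) by simp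
  qed
  show "\<exists>A :: nat set set set. system A omega1 omega0 omega0 \<and> \<not> chiCF_le A \<rho>"
    using sys ncf by blast
qed


definition RR :: "(nat set \<times> nat set \<Rightarrow> nat set) \<Rightarrow> nat set \<Rightarrow> nat set set" where
  "RR k z = (\<lambda>y. k (z, y)) ` G"

lemma exists_k: "\<exists>k. inj_on k (G \<times> G) \<and> k ` (G \<times> G) \<subseteq> G"
proof -
  have "infinite G" using G_uncountable countable_finite by blast
  then have "|G \<times> G| =o |G|" by (rule card_of_Times_same_infinite)
  then have "|G \<times> G| \<le>o |G|" using ordIso_iff_ordLeq by blast
  then show ?thesis unfolding card_of_ordLeq[symmetric] by simp
qed

locale kk =
  fixes k :: "nat set \<times> nat set \<Rightarrow> nat set"
  assumes kinj: "inj_on k (G \<times> G)" and kG: "k ` (G \<times> G) \<subseteq> G"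
begin

lemma RR_G: "RR k z \<subseteq> G" if "z \<in> G" using kG that unfolding RR_def by blast

lemma RR_unc: "z \<in> G \<Longrightarrow> \<not> countable (RR k z)"
proof
  assume z: "z \<in> G" and c: "countable (RR k z)"
  have "inj_on (\<lambda>y. k (z, y)) G" using kinj z unfolding inj_on_def by blast
  then show False using countable_image_inj_on[OF c[unfolded RR_def]] G_uncountable by blast
qed

lemma RR_disj:
  assumes "z \<in> G" "z' \<in> G" "z \<noteq> z'" shows "RR k z \<inter> RR k z' = {}"
proof (rule ccontr)
  assume "RR k z \<inter> RR k z' \<noteq> {}"
  then obtain y y' where y: "y \<in> G" "y' \<in> G" "k (z, y) = k (z', y')" unfolding RR_def by blast
  then have "(z, y) = (z', y')" using kinj assms unfolding inj_on_def by blast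
  then show False using assms(3) by simp
qed

end

definition Sk :: "cand \<Rightarrow> nat \<Rightarrow> nat set set" where
  "Sk h n = range (h n) \<inter> G"

definition LL :: "cand \<Rightarrow> nat set set" where
  "LL h = {x\<in>G. \<exists>n. \<exists>s\<in>Sk h n. (x, s) \<in> omega1}"

definition Fam :: "(nat set \<times> nat set \<Rightarrow> nat set) \<Rightarrow> cand \<Rightarrow> nat set set set" where
  "Fam k h = {Sk h n | n. Sk h n \<noteq> {} \<and> Sk h n \<subseteq> LL h \<and> bigL (LL h) (Sk h n)
                       \<and> (\<forall>z\<in>G. finite (Sk h n \<inter> RR k z))}"

definition spec2 :: "(nat set \<times> nat set \<Rightarrow> nat set) \<Rightarrow> nat set set set \<Rightarrow> nat set set set \<Rightarrow> nat set set \<Rightarrow> bool" where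
  "spec2 k F prev P \<longleftrightarrow> P \<subseteq> \<Union>F \<and> small P \<and> countable P \<and> (\<forall>Y\<in>prev. finite (P \<inter> Y))
     \<and> (\<forall>z\<in>G. finite (P \<inter> RR k z)) \<and> (\<forall>S\<in>F. \<exists>x y. x \<in> P \<and> y \<in> P \<and> x \<in> S \<and> y \<in> S \<and> x \<noteq> y)
     \<and> (\<forall>x\<in>P. \<exists>y\<in>P. y \<noteq> x \<and> (\<exists>S\<in>F. x \<in> S \<and> y \<in> S))"

definition stage2 where
  "stage2 k j g \<eta> = (SOME P. spec2 k (Fam k (cand_of j \<eta>)) (g ` underS omega1 \<eta>) P)"

definition P2 where "P2 k j = wo_rel.worec omega1 (stage2 k j)"

lemma P2_fix: "P2 k j \<eta> = stage2 k j (P2 k j) \<eta>"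
proof -
  have "wo_rel.adm_wo omega1 (stage2 k j)"
    unfolding wo_rel.adm_wo_def[OF worel1]
  proof (intro allI impI)
    fix f g :: "nat set \<Rightarrow> nat set set" and x
    assume "\<forall>y\<in>underS omega1 x. f y = g y"
    then have "f ` underS omega1 x = g ` underS omega1 x" by (simp add: image_def)
    then show "stage2 k j f x = stage2 k j g x" unfolding stage2_def by simp
  qed
  then show ?thesis unfolding P2_def using wo_rel.worec_fixpoint[OF worel1] by metis
qed

lemma partner_div: "(if even n then Suc n else n - 1) div 2 = (n::nat) div 2"
  by presburger

lemma partner_ne: "(if even n then Suc n else n - 1) \<noteq> (n::nat)"
  by presburger

context kk begin

lemma Fam_countable: "countable (Fam k h)"
proof -
  have "Fam k h \<subseteq> range (Sk h)" unfolding Fam_def by blast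
  moreover have "countable (range (Sk h))" by simp
  ultimately show ?thesis by (rule countable_subset)
qed

lemma Sk_countable: "countable (Sk h n)" unfolding Sk_def by simp

lemma exist2:
  assumes "countable prev" "\<forall>Y\<in>prev. small Y"
  shows "\<exists>P. spec2 k (Fam k h) prev P"
proof (cases "Fam k h = {}")
  case True
  have "spec2 k (Fam k h) prev {}" unfolding spec2_def small_def True by simp
  then show ?thesis by blast
next
  case False
  let ?F = "Fam k h" and ?L = "LL h"
  define A where "A n = from_nat_into ?F (n div 2)" for n
  have AF: "A n \<in> ?F" for n unfolding A_def using False by (simp add: from_nat_into)
  have Fprop: "S \<noteq> {} \<and> S \<subseteq> ?L \<and> bigL ?L S \<and> (\<forall>z\<in>G. finite (S \<inter> RR k z))" if "S \<in> ?F" for S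
    using that unfolding Fam_def by blast
  have FG: "S \<subseteq> G" if "S \<in> ?F" for S using that unfolding Fam_def Sk_def by blast
  have Fc: "countable S" if S: "S \<in> ?F" for S
  proof -
    obtain n where "S = Sk h n" using S unfolding Fam_def by blast
    then show ?thesis using Sk_countable by simp
  qed
  define U where "U = \<Union>?F"
  have Uc: "countable U"
  proof -
    have "U = (\<Union>S\<in>?F. S)" unfolding U_def by simp
    moreover have "countable (\<Union>S\<in>?F. S)" by (rule countable_UN) (use Fam_countable Fc in auto)
    ultimately show ?thesis by simp
  qed
  have UG: "U \<subseteq> G" unfolding U_def using FG by blast
  have Lne: "?L \<noteq> {}" using False Fprop by blast
  define Z where "Z = {z\<in>G. RR k z \<inter> U \<noteq> {}}"
  define rz where "rz u = (SOME z. z \<in> G \<and> u \<in> RR k z)" for u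
  have "Z \<subseteq> rz ` U"
  proof
    fix z assume "z \<in> Z"
    then obtain u where u: "u \<in> RR k z" "u \<in> U" "z \<in> G" unfolding Z_def by blast
    have ex: "\<exists>z'. z' \<in> G \<and> u \<in> RR k z'" using u by blast
    have rzu: "rz u \<in> G \<and> u \<in> RR k (rz u)" unfolding rz_def by (rule someI_ex[OF ex])
    have "rz u = z"
    proof (rule ccontr)
      assume "rz u \<noteq> z"
      then have "RR k (rz u) \<inter> RR k z = {}" using RR_disj rzu u(3) by blast
      then show False using rzu u(1) by blast
    qed
    then show "z \<in> rz ` U" using u by blast
  qed
  moreover have "countable (rz ` U)" using Uc by simp
  ultimately have Zc: "countable Z" by (rule countable_subset)
  define YY where "YY = prev \<union> RR k ` Z"
  have YYc: "countable YY" unfolding YY_def using assms(1) Zc by simp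
  have YYp: "\<forall>Y\<in>YY. small Y \<or> (\<forall>n. finite (Y \<inter> A n))"
  proof
    fix Y assume "Y \<in> YY"
    then consider (a) "Y \<in> prev" | (b) "Y \<in> RR k ` Z" unfolding YY_def by blast
    then show "small Y \<or> (\<forall>n. finite (Y \<inter> A n))"
    proof cases
      case a then show ?thesis using assms(2) by blast
    next
      case b
      then obtain z where z: "z \<in> G" "Y = RR k z" unfolding Z_def by blast
      have "finite (Y \<inter> A n)" for n using Fprop[OF AF[of n]] z by (simp add: Int_commute)
      then show ?thesis by blast
    qed
  qed
  have AL: "\<forall>n. A n \<subseteq> ?L" and Ab: "\<forall>n. bigL ?L (A n)" using Fprop AF by blast+
  obtain c where c: "\<forall>n. c n \<in> A n" "\<forall>n. lt (c n) (c (Suc n))" "\<forall>Y\<in>YY. finite (range c \<inter> Y)"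
    using diag[OF Lne AL Ab YYc YYp] by blast
  have injc: "inj c" using inc_inj[OF c(2)] .
  have PU: "range c \<subseteq> U" unfolding U_def using c(1) AF by blast
  have "spec2 k ?F prev (range c)"
    unfolding spec2_def
  proof (intro conjI ballI)
    show "range c \<subseteq> \<Union>?F" using PU unfolding U_def .
    show "small (range c)" using inc_small[OF c(2)] .
    show "countable (range c)" by simp
  next
    fix Y assume "Y \<in> prev"
    then have "Y \<in> YY" unfolding YY_def by blast
    then show "finite (range c \<inter> Y)" by (rule bspec[OF c(3)])
  next
    fix z assume z: "z \<in> G"
    show "finite (range c \<inter> RR k z)"
    proof (cases "z \<in> Z")
      case True
      then have "RR k z \<in> YY" unfolding YY_def by blast
      then show ?thesis by (rule bspec[OF c(3)])
    next
      case False
      then have "RR k z \<inter> U = {}" using z unfolding Z_def by blast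
      then have "range c \<inter> RR k z = {}" using PU by blast
      then show ?thesis by simp
    qed
  next
    fix S assume S: "S \<in> ?F"
    obtain m where m: "from_nat_into ?F m = S" using from_nat_into_surj[OF Fam_countable S] by blast
    have a1: "A (2*m) = S" "A (Suc (2*m)) = S" unfolding A_def using m by simp_all
    have ne: "c (2*m) \<noteq> c (Suc (2*m))" using injc by (simp add: inj_eq)
    have i1: "c (2*m) \<in> S" using spec[OF c(1), of "2*m"] a1(1) by simp
    have i2: "c (Suc (2*m)) \<in> S" using spec[OF c(1), of "Suc (2*m)"] a1(2) by simp
    show "\<exists>x y. x \<in> range c \<and> y \<in> range c \<and> x \<in> S \<and> y \<in> S \<and> x \<noteq> y"
      using i1 i2 ne by blast
  next
    fix x assume "x \<in> range c"
    then obtain n where n: "x = c n" by blast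
    define m where "m = (if even n then Suc n else n - 1)"
    have "A m = A n" unfolding A_def m_def using partner_div by simp
    moreover have "c m \<noteq> c n" using injc partner_ne[of n] unfolding m_def by (simp add: inj_eq)
    moreover have "c m \<in> A m" "c n \<in> A n" using c(1) by blast+
    ultimately have "c m \<in> range c \<and> c m \<noteq> x \<and> x \<in> A n \<and> c m \<in> A n" using n by simp
    then show "\<exists>y\<in>range c. y \<noteq> x \<and> (\<exists>S\<in>?F. x \<in> S \<and> y \<in> S)"
      using AF[of n] by blast
  qed
  then show ?thesis by blast
qed

lemma spec2_all:
  "\<eta> \<in> G \<Longrightarrow> spec2 k (Fam k (cand_of j \<eta>)) (P2 k j ` underS omega1 \<eta>) (P2 k j \<eta>)"
proof (induction \<eta> rule: wo_rel.well_order_induct[OF worel1])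
  case (1 x)
  have prev_small: "\<forall>Y\<in>P2 k j ` underS omega1 x. small Y"
  proof
    fix Y assume "Y \<in> P2 k j ` underS omega1 x"
    then obtain y where y: "y \<in> underS omega1 x" "Y = P2 k j y" by blast
    then have yx: "y \<noteq> x \<and> (y, x) \<in> omega1" unfolding underS_def by simp
    then have "y \<in> G" using FieldI1 by metis
    then show "small Y" using 1 yx y unfolding spec2_def by blast
  qed
  have "countable (P2 k j ` underS omega1 x)" using countable_underS[OF 1(2)] by simp
  then have "\<exists>P. spec2 k (Fam k (cand_of j x)) (P2 k j ` underS omega1 x) P"
    using exist2 prev_small by blast
  then have "spec2 k (Fam k (cand_of j x)) (P2 k j ` underS omega1 x) (stage2 k j (P2 k j) x)"
    unfolding stage2_def by (rule someI_ex)
  then show ?case using P2_fix by metis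
qed

end


lemma unc_omega1:
  assumes "X \<subseteq> G" "\<not> countable X" shows "|X| =o omega1"
proof -
  have "|X| \<le>o |G|" using assms(1) by (rule card_of_mono1)
  then have le: "|X| \<le>o omega1" using card_of_Field_ordIso[OF co1] ordLeq_ordIso_trans by blast
  have "\<not> |X| \<le>o natLeq" using assms(2) countable_card_le_natLeq by blast
  then have "natLeq <o |X|"
    using not_ordLeq_iff_ordLess[OF natLeq_Well_order card_of_Well_order[of X]] by simp
  then have "omega1 \<le>o |X|"
    using cardSuc_ordLess_ordLeq[OF natLeq_Card_order card_of_Card_order[of X]] by simp
  then show ?thesis using le ordIso_iff_ordLeq by blast
qed

context kk begin

lemma part2:
  assumes CH
  shows "\<forall>\<rho> :: nat set rel. Card_order \<rho> \<and> \<rho> <o omega1 \<longrightarrow>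
            (\<exists>A :: nat set set set. system A omega1 omega1 omega0 \<and> \<not> chiCF_le A \<rho>)"
proof (intro allI impI)
  fix \<rho> :: "nat set rel" assume r: "Card_order \<rho> \<and> \<rho> <o omega1"
  obtain j where j: "inj_on j ((UNIV::cand set) \<times> G)" "j ` ((UNIV::cand set) \<times> G) \<subseteq> G"
    using exists_j[OF assms] by blast
  define B where "B \<eta> = P2 k j \<eta> \<union> RR k \<eta>" for \<eta>
  define A where "A = B ` G"
  have sp: "\<And>\<eta>. \<eta> \<in> G \<Longrightarrow> spec2 k (Fam k (cand_of j \<eta>)) (P2 k j ` underS omega1 \<eta>) (P2 k j \<eta>)"
    using spec2_all by blast
  have PG: "P2 k j \<eta> \<subseteq> G" if "\<eta> \<in> G" for \<eta>
  proof -
    have "P2 k j \<eta> \<subseteq> \<Union>(Fam k (cand_of j \<eta>))" using sp[OF that] unfolding spec2_def by blast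
    moreover have "\<Union>(Fam k h) \<subseteq> G" for h unfolding Fam_def Sk_def by blast
    ultimately show ?thesis by blast
  qed
  have BG: "B \<eta> \<subseteq> G" if "\<eta> \<in> G" for \<eta> unfolding B_def using PG[OF that] RR_G[OF that] by blast
  have Bunc: "\<not> countable (B \<eta>)" if "\<eta> \<in> G" for \<eta>
    unfolding B_def using RR_unc[OF that] countable_subset[of "RR k \<eta>"] by blast
  have PP: "finite (P2 k j x \<inter> P2 k j y)" if xy: "x \<in> G" "y \<in> G" "x \<noteq> y" for x y
  proof -
    have "lt x y \<or> lt y x" using lt_total xy by blast
    then show ?thesis
    proof
      assume "lt x y"
      then have xu: "x \<in> underS omega1 y" unfolding lt_def underS_def by simp
      have "\<forall>Y\<in>P2 k j ` underS omega1 y. finite (P2 k j y \<inter> Y)" using sp[OF xy(2)] unfolding spec2_def by blast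
      then have "finite (P2 k j y \<inter> P2 k j x)" using xu by blast
      then show ?thesis by (simp add: Int_commute)
    next
      assume "lt y x"
      then have yu: "y \<in> underS omega1 x" unfolding lt_def underS_def by simp
      have "\<forall>Y\<in>P2 k j ` underS omega1 x. finite (P2 k j x \<inter> Y)" using sp[OF xy(1)] unfolding spec2_def by blast
      then show "finite (P2 k j x \<inter> P2 k j y)" using yu by blast
    qed
  qed
  have PR: "finite (P2 k j x \<inter> RR k y)" if "x \<in> G" "y \<in> G" for x y
    using sp[OF that(1)] that(2) unfolding spec2_def by blast
  have ad: "finite (B x \<inter> B y)" if xy: "x \<in> G" "y \<in> G" "x \<noteq> y" for x y
  proof -
    have "B x \<inter> B y \<subseteq> (P2 k j x \<inter> P2 k j y) \<union> (P2 k j x \<inter> RR k y) \<union> (P2 k j y \<inter> RR k x) \<union> (RR k x \<inter> RR k y)"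
      unfolding B_def by blast
    moreover have "RR k x \<inter> RR k y = {}" using RR_disj xy by blast
    moreover have "finite (P2 k j x \<inter> P2 k j y)" using PP xy by blast
    moreover have "finite (P2 k j x \<inter> RR k y)" using PR xy by blast
    moreover have "finite (P2 k j y \<inter> RR k x)" using PR xy by blast
    ultimately show ?thesis by (metis finite_Un finite.emptyI finite_subset)
  qed
  have injB: "inj_on B G"
  proof (rule adfam_inj)
    show "\<forall>x\<in>G. infinite (B x)" using Bunc countable_finite by blast
    show "\<forall>x\<in>G. \<forall>y\<in>G. x \<noteq> y \<longrightarrow> finite (B x \<inter> B y)" using ad by blast
  qed
  have sys: "system A omega1 omega1 omega0"
    unfolding system_def A_def
  proof (intro conjI ballI impI)
    show "|B ` G| =o omega1" using inj_image_omega1[OF injB] .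
    fix X assume "X \<in> B ` G"
    then obtain x where x: "x \<in> G" "X = B x" by blast
    show "|X| =o omega1" using unc_omega1[OF BG[OF x(1)] Bunc[OF x(1)]] x(2) by simp
  next
    fix X Y assume "X \<in> B ` G" "Y \<in> B ` G" "X \<noteq> Y"
    then obtain x y where "x \<in> G" "y \<in> G" "X = B x" "Y = B y" "x \<noteq> y" by blast
    then show "|X \<inter> Y| <o omega0" using ad fin_natLeq by blast
  qed
  have ncf: "\<not> chiCF_le A \<rho>"
  proof
    assume "chiCF_le A \<rho>"
    then obtain f :: "nat set \<Rightarrow> nat set" and C where fC: "cf_coloring A f C" "|C| \<le>o \<rho>"
      unfolding chiCF_le_def by blast
    have "|C| <o omega1" using fC(2) r ordLeq_ordLess_trans by blast
    then have cC: "countable C" by (rule ordLess_omega1_countable)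
    have fAC: "f ` \<Union>A \<subseteq> C" using fC(1) unfolding cf_coloring_def by blast
    have cfA: "\<forall>X\<in>A. \<exists>z\<in>C. \<exists>!x. x \<in> X \<and> f x = z"
      using fC(1) unfolding cf_coloring_def by (rule conjunct2)
    obtain x0 where x0: "x0 \<in> G" using G_ne by blast
    have "B x0 \<noteq> {}" using Bunc[OF x0] by force
    then obtain a0 where "a0 \<in> \<Union>A" unfolding A_def using x0 by blast
    then have Cne: "C \<noteq> {}" using fAC by blast
    define c0 where "c0 = (SOME c. c \<in> C)"
    have c0C: "c0 \<in> C" unfolding c0_def using Cne by (simp add: some_in_eq)
    define f' where "f' x = (if x \<in> \<Union>A then f x else c0)" for x
    have f'C: "f' x \<in> C" for x unfolding f'_def using fAC c0C by auto
    define K where "K c = {x\<in>G. f' x = c}" for c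
    define Zc where "Zc c = {z\<in>G. K c \<inter> RR k z \<noteq> {}}" for c
    define C2 where "C2 = {c\<in>C. \<not> countable (Zc c)}"
    define pick where "pick c z = (SOME x. x \<in> K c \<inter> RR k z)" for c z
    define T where "T c = pick c ` Zc c" for c
    have pickp: "pick c z \<in> K c \<inter> RR k z" if "z \<in> Zc c" for c z
    proof -
      have "\<exists>x. x \<in> K c \<inter> RR k z" using that unfolding Zc_def by blast
      then show ?thesis unfolding pick_def by (rule someI_ex)
    qed
    have ZcG: "Zc c \<subseteq> G" for c unfolding Zc_def by blast
    have TK: "T c \<subseteq> K c" for c unfolding T_def using pickp by blast
    have KG: "K c \<subseteq> G" for c unfolding K_def by blast
    have Tunc: "\<not> countable (T c)" if "c \<in> C2" for c
    proof
      assume cT: "countable (T c)"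
      have "inj_on (pick c) (Zc c)"
      proof (rule inj_onI)
        fix z z' assume zz: "z \<in> Zc c" "z' \<in> Zc c" "pick c z = pick c z'"
        show "z = z'"
        proof (rule ccontr)
          assume "z \<noteq> z'"
          then have "RR k z \<inter> RR k z' = {}" using RR_disj zz ZcG by blast
          then show False using pickp[OF zz(1)] pickp[OF zz(2)] zz(3) by auto
        qed
      qed
      then have "countable (Zc c)" using countable_image_inj_on[OF cT[unfolded T_def]] by blast
      then show False using that unfolding C2_def by blast
    qed
    have TR: "finite (T c \<inter> RR k z)" if "z \<in> G" for c z
    proof -
      have "T c \<inter> RR k z \<subseteq> {pick c z}"
      proof
        fix x assume x: "x \<in> T c \<inter> RR k z"
        then obtain z' where z': "z' \<in> Zc c" "x = pick c z'" unfolding T_def by blast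
        have "x \<in> RR k z'" using pickp[OF z'(1)] z'(2) by blast
        then have "z' = z" using RR_disj[of z' z] x that ZcG z'(1) by blast
        then show "x \<in> {pick c z}" using z' by simp
      qed
      then show ?thesis using finite_subset by blast
    qed
    have cC2: "countable C2" using cC countable_subset[of C2 C] unfolding C2_def by blast
    obtain L where L: "L \<subseteq> G" "L \<noteq> {}" "countable L" "\<forall>x\<in>L. \<forall>y. (y,x) \<in> omega1 \<longrightarrow> y \<in> L"
        "\<forall>c\<in>C2. bigL L (T c \<inter> L)"
    proof -
      have "\<forall>c\<in>C2. T c \<subseteq> G \<and> \<not> countable (T c)" using TK KG Tunc by blast
      then obtain L where "L \<subseteq> G \<and> L \<noteq> {} \<and> countable L \<and> (\<forall>x\<in>L. \<forall>y. (y,x) \<in> omega1 \<longrightarrow> y \<in> L)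
           \<and> (\<forall>c\<in>C2. bigL L (T c \<inter> L))" using multi_seq[OF cC2, of T] by blast
      then show ?thesis using that by blast
    qed
    define D where "D c = T c \<inter> L" for c
    have Dne: "D c \<noteq> {}" if "c \<in> C2" for c
      using L(2) L(5) that unfolding bigL_def D_def by blast
    have Dc: "countable (D c)" for c unfolding D_def using L(3) countable_subset by blast
    have DK: "D c \<subseteq> K c" for c unfolding D_def using TK by blast
    define h :: cand where
      "h = (if C2 = {} then (\<lambda>_ _. x0) else (\<lambda>n m. from_nat_into (D (from_nat_into C2 n)) m))"
    have Skh: "\<exists>c. Sk h n \<subseteq> K c" for n
    proof (cases "C2 = {}")
      case True
      then have "Sk h n \<subseteq> {x0}" unfolding Sk_def h_def by auto
      moreover have "x0 \<in> K (f' x0)" unfolding K_def using x0 by simp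
      ultimately show ?thesis by blast
    next
      case False
      let ?c = "from_nat_into C2 n"
      have cin: "?c \<in> C2" using False by (simp add: from_nat_into)
      have "range (h n) = D ?c" unfolding h_def using False Dne[OF cin] Dc by simp
      then have "Sk h n \<subseteq> D ?c" unfolding Sk_def by blast
      then show ?thesis using DK by blast
    qed
    define Zbad where "Zbad = (\<Union>c\<in>C - C2. Zc c)"
    have Zbc: "countable Zbad" unfolding Zbad_def
      by (rule countable_UN) (use cC C2_def in auto)
    have "\<not> (\<lambda>y. j (h, y)) ` G \<subseteq> Zbad"
    proof
      assume "(\<lambda>y. j (h, y)) ` G \<subseteq> Zbad"
      then have "countable ((\<lambda>y. j (h, y)) ` G)" using Zbc countable_subset by blast
      moreover have "inj_on (\<lambda>y. j (h, y)) G" using j(1) unfolding inj_on_def by blast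
      ultimately have "countable G" using countable_image_inj_on by blast
      then show False using G_uncountable by blast
    qed
    then obtain y0 where y0: "y0 \<in> G" "j (h, y0) \<notin> Zbad" by blast
    define \<eta> where "\<eta> = j (h, y0)"
    have etaG: "\<eta> \<in> G" unfolding \<eta>_def using j(2) y0(1) by blast
    have ch: "cand_of j \<eta> = h" unfolding \<eta>_def using cand_of_j[OF j(1) y0(1)] .
    have spe: "spec2 k (Fam k h) (P2 k j ` underS omega1 \<eta>) (P2 k j \<eta>)" using sp[OF etaG] ch by simp
    have Fmono: "\<exists>c. \<forall>x\<in>S. f' x = c" if SF: "S \<in> Fam k h" for S
    proof -
      obtain n where "S = Sk h n" using SF unfolding Fam_def by blast
      then show ?thesis using Skh[of n] unfolding K_def by blast
    qed
    have DF: "D c \<in> Fam k h" if c: "c \<in> C2" for c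
    proof -
      have False': "C2 \<noteq> {}" using c by blast
      obtain n where n: "from_nat_into C2 n = c" using from_nat_into_surj[OF cC2 c] by blast
      have "range (h n) = D c" unfolding h_def using False' n Dne[OF c] Dc by simp
      moreover have "D c \<subseteq> G" unfolding D_def using L(1) by blast
      ultimately have SD: "Sk h n = D c" unfolding Sk_def by blast
      have sub: "LL h \<subseteq> L"
      proof
        fix x assume "x \<in> LL h"
        then obtain m s where "s \<in> Sk h m" "(x, s) \<in> omega1" unfolding LL_def by blast
        moreover have "Sk h m \<subseteq> L"
        proof -
          have cm: "from_nat_into C2 m \<in> C2" using False' by (rule from_nat_into)
          have "range (h m) \<subseteq> D (from_nat_into C2 m)" unfolding h_def
            using False' range_from_nat_into_subset[OF Dne[OF cm]] by simp
          then show ?thesis unfolding Sk_def D_def by blast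
        qed
        ultimately show "x \<in> L" using L(4) by blast
      qed
      have DL: "D c \<subseteq> LL h"
      proof
        fix x assume x: "x \<in> D c"
        then have xG: "x \<in> G" unfolding D_def using L(1) by blast
        have "x \<in> Sk h n" using x SD by simp
        moreover have "(x, x) \<in> omega1" using refl1[OF xG] .
        ultimately show "x \<in> LL h" unfolding LL_def using xG by blast
      qed
      have "bigL L (D c)" using L(5) c unfolding D_def by blast
      then have bD: "bigL (LL h) (D c)" by (rule bigL_mono[OF sub])
      have fD: "\<forall>z\<in>G. finite (D c \<inter> RR k z)"
      proof
        fix z assume "z \<in> G"
        then have "finite (T c \<inter> RR k z)" by (rule TR)
        moreover have "D c \<inter> RR k z \<subseteq> T c \<inter> RR k z" unfolding D_def by blast
        ultimately show "finite (D c \<inter> RR k z)" by (rule finite_subset[rotated])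
      qed
      have "Sk h n \<noteq> {} \<and> Sk h n \<subseteq> LL h \<and> bigL (LL h) (Sk h n) \<and> (\<forall>z\<in>G. finite (Sk h n \<inter> RR k z))"
        using SD Dne[OF c] DL bD fD by simp
      then have "Sk h n \<in> Fam k h" unfolding Fam_def by blast
      then show ?thesis using SD by simp
    qed
    let ?X = "B \<eta>"
    have XA: "?X \<in> A" unfolding A_def using etaG by blast
    have XU: "?X \<subseteq> \<Union>A" using XA by blast
    from bspec[OF cfA XA] obtain z where z: "z \<in> C" "\<exists>!x. x \<in> ?X \<and> f x = z" ..
    have "\<exists>x. (x \<in> ?X \<and> f x = z) \<and> (\<forall>y. y \<in> ?X \<and> f y = z \<longrightarrow> y = x)"
      using z(2) by (simp only: Ex1_def)
    then obtain x where x: "x \<in> ?X" "f x = z" and uq: "\<forall>y. y \<in> ?X \<and> f y = z \<longrightarrow> y = x"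
      by blast
    have ff': "f y = f' y" if "y \<in> ?X" for y using that XU unfolding f'_def by auto
    show False
    proof (cases "x \<in> P2 k j \<eta>")
      case True
      have "\<forall>x\<in>P2 k j \<eta>. \<exists>y\<in>P2 k j \<eta>. y \<noteq> x \<and> (\<exists>S\<in>Fam k h. x \<in> S \<and> y \<in> S)"
        using spe unfolding spec2_def by blast
      then obtain y S where y: "y \<in> P2 k j \<eta>" "y \<noteq> x" "S \<in> Fam k h" "x \<in> S" "y \<in> S"
        using True by blast
      have "f' y = f' x" using Fmono[OF y(3)] y(4,5) by force
      moreover have yX: "y \<in> ?X" unfolding B_def using y(1) by blast
      ultimately have "f y = z" using ff' x by simp
      then show False using uq yX y(2) by blast
    next
      case False
      then have xR: "x \<in> RR k \<eta>" using x(1) unfolding B_def by blast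
      have "f' x = z" using ff'[OF x(1)] x(2) by simp
      then have "x \<in> K z" unfolding K_def using BG[OF etaG] x(1) by blast
      then have "\<eta> \<in> Zc z" unfolding Zc_def using xR etaG by blast
      then have zC2: "z \<in> C2" using y0(2) z(1) unfolding Zbad_def \<eta>_def by blast
      have "\<forall>S\<in>Fam k h. \<exists>a b. a \<in> P2 k j \<eta> \<and> b \<in> P2 k j \<eta> \<and> a \<in> S \<and> b \<in> S \<and> a \<noteq> b"
        using spe unfolding spec2_def by blast
      then obtain a b where ab: "a \<in> P2 k j \<eta>" "b \<in> P2 k j \<eta>" "a \<in> D z" "b \<in> D z" "a \<noteq> b"
        using DF[OF zC2] by blast
      have aX: "a \<in> ?X" and bX: "b \<in> ?X" unfolding B_def using ab by blast+
      have "f' a = z" "f' b = z" using ab(3,4) DK unfolding K_def by blast+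
      then have "f a = z" "f b = z" using ff' aX bX by simp_all
      then have "a = x" "b = x" using uq aX bX by blast+
      then show False using ab(5) by simp
    qed
  qed
  show "\<exists>A :: nat set set set. system A omega1 omega1 omega0 \<and> \<not> chiCF_le A \<rho>"
    using sys ncf by blast
qed

end


theorem theorem10p3:
  assumes "CH"
  shows "(\<forall>A :: 'a set set. system A omega1 omega1 omega0 \<longrightarrow> chiCF_le A omega1)
       \<and> (\<forall>\<rho> :: nat set rel. Card_order \<rho> \<and> \<rho> <o omega1 \<longrightarrow>
            (\<exists>A :: nat set set set. system A omega1 omega1 omega0 \<and> \<not> chiCF_le A \<rho>))
       \<and> (\<forall>A :: 'a set set. system A omega1 omega0 omega0 \<longrightarrow> chiCF_le A omega1)
       \<and> (\<forall>\<rho> :: nat set rel. Card_order \<rho> \<and> \<rho> <o omega1 \<longrightarrow>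
            (\<exists>A :: nat set set set. system A omega1 omega0 omega0 \<and> \<not> chiCF_le A \<rho>))"
proof -
  obtain k where k: "inj_on k (G \<times> G)" "k ` (G \<times> G) \<subseteq> G" using exists_k by blast
  interpret kk k using k by unfold_locales
  have p2: "\<forall>\<rho> :: nat set rel. Card_order \<rho> \<and> \<rho> <o omega1 \<longrightarrow>
            (\<exists>A :: nat set set set. system A omega1 omega1 omega0 \<and> \<not> chiCF_le A \<rho>)"
    using part2[OF assms] .
  have p4: "\<forall>\<rho> :: nat set rel. Card_order \<rho> \<and> \<rho> <o omega1 \<longrightarrow>
            (\<exists>A :: nat set set set. system A omega1 omega0 omega0 \<and> \<not> chiCF_le A \<rho>)"
    using part4[OF assms] .
  have p1: "\<forall>A :: 'a set set. system A omega1 omega1 omega0 \<longrightarrow> chiCF_le A omega1"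
    using part1_up by blast
  have p3: "\<forall>A :: 'a set set. system A omega1 omega0 omega0 \<longrightarrow> chiCF_le A omega1"
    using part3_up by blast
  show ?thesis using p1 p2 p3 p4 by blast
qed

end
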